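(* Let $\Omega$ be a verification operator for $|\Psi\rangle$ with spectral gap $\nu(\Omega)$, and let $\sigma_1,\dots,\sigma_N$ be density operators on $\mathcal H$. Let $\epsilon_j=1-\langle\Psi|\sigma_j|\Psi\rangle$ and $\bar\epsilon=\frac1N\sum_{j=1}^N\epsilon_j$. Then the probability that the independent states $\sigma_1,\dots,\sigma_N$ pass all $N$ tests satisfies $$\prod_{j=1}^N\mathrm{tr}(\Omega\sigma_j)\le[1-\nu(\Omega)\bar\epsilon]^N.$$
   Context: Let $\mathcal H$ be a finite-dimensional Hilbert space and $|\Psi\rangle\in\mathcal H$ a unit vector. A verification operator for $|\Psi\rangle$ is a Hermitian operator $\Omega$ on $\mathcal H$ with $0\le\Omega\le1$ and $\Omega|\Psi\rangle=|\Psi\rangle$, whose eigenvalue $1$ is nondegenerate; with $\beta(\Omega)$ its second largest eigenvalue, the spectral gap is $\nu(\Omega)=1-\beta(\Omega)$. *)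

theory Defs
  imports "Jordan_Normal_Form.Schur_Decomposition"
begin

definition mtrace :: "complex mat \<Rightarrow> complex" where
  "mtrace A = (\<Sum>i<dim_row A. A $$ (i,i))"

definition hermitian :: "nat \<Rightarrow> complex mat \<Rightarrow> bool" where
  "hermitian n A \<longleftrightarrow> A \<in> carrier_mat n n \<and> mat_adjoint A = A"

text \<open>Positive semidefinite (0 \<le> A): Hermitian with nonnegative expectation values
  (the expectation value of a Hermitian operator is real).\<close>
definition psd :: "nat \<Rightarrow> complex mat \<Rightarrow> bool" where
  "psd n A \<longleftrightarrow> hermitian n A \<and> (\<forall>v\<in>carrier_vec n. 0 \<le> Re ((A *\<^sub>v v) \<bullet>c v))"

definition density_op :: "nat \<Rightarrow> complex mat \<Rightarrow> bool" where
  "density_op n \<rho> \<longleftrightarrow> psd n \<rho> \<and> mtrace \<rho> = 1"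

definition unit_vec :: "nat \<Rightarrow> complex vec \<Rightarrow> bool" where
  "unit_vec n \<psi> \<longleftrightarrow> \<psi> \<in> carrier_vec n \<and> \<psi> \<bullet>c \<psi> = 1"

definition verification_op :: "nat \<Rightarrow> complex vec \<Rightarrow> complex mat \<Rightarrow> bool" where
  "verification_op n \<psi> \<Omega> \<longleftrightarrow>
     psd n \<Omega> \<and> psd n (1\<^sub>m n - \<Omega>) \<and> \<Omega> *\<^sub>v \<psi> = \<psi> \<and>
     (\<forall>v\<in>carrier_vec n. \<Omega> *\<^sub>v v = v \<longrightarrow> (\<exists>c. v = c \<cdot>\<^sub>v \<psi>))"

text \<open>Since eigenvalue 1 is the largest and nondegenerate,
  this is the largest eigenvalue different from 1 (eigenvalues of a Hermitian matrix
  are real). If there is none (dimension 1) we set it to 0.\<close>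
definition second_eig :: "complex mat \<Rightarrow> real" where
  "second_eig \<Omega> =
     (if {k. eigenvalue \<Omega> k \<and> k \<noteq> 1} = {} then 0
      else Max (Re ` {k. eigenvalue \<Omega> k \<and> k \<noteq> 1}))"

definition spectral_gap :: "complex mat \<Rightarrow> real" where
  "spectral_gap \<Omega> = 1 - second_eig \<Omega>"

end

theory Submission
  imports Defs "Jordan_Normal_Form.Spectral_Radius" "HOL-Analysis.Convex"
begin

lemma csprod_sum: "x \<bullet>c (y::complex vec) = (\<Sum>i<dim_vec y. x$i * cnj (y$i))"
  by (simp add: scalar_prod_def atLeast0LessThan)

lemma adj_dims[simp]: "dim_row (mat_adjoint A) = dim_col A" "dim_col (mat_adjoint A) = dim_row A"
  by (auto simp: mat_adjoint_def)

lemma adj_carrier[simp]: "A \<in> carrier_mat n m \<Longrightarrow> mat_adjoint A \<in> carrier_mat m n"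
  by (metis adj_dims carrier_matD carrier_matI)

lemma adj_index[simp]: "i < dim_col A \<Longrightarrow> j < dim_row A \<Longrightarrow>
   mat_adjoint (A::complex mat) $$ (i,j) = cnj (A $$ (j,i))"
  by (simp add: mat_adjoint_def mat_of_rows_def col_def)

lemma cnj_sprod: "x \<in> carrier_vec n \<Longrightarrow> y \<in> carrier_vec n \<Longrightarrow> cnj (x \<bullet>c (y::complex vec)) = y \<bullet>c x"
  unfolding csprod_sum cnj_sum by (intro sum.cong) (auto simp: mult.commute)

lemma adj_mult_entry: assumes "U \<in> carrier_mat n m" "i < m" "j < m"
  shows "(mat_adjoint U * (U::complex mat)) $$ (i,j) = col U j \<bullet>c col U i"
  using assms unfolding csprod_sum by (auto simp: scalar_prod_def atLeast0LessThan intro!: sum.cong)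

lemma mv_sum: "A \<in> carrier_mat n m \<Longrightarrow> x \<in> carrier_vec m \<Longrightarrow> i < n \<Longrightarrow>
  (A *\<^sub>v x) $ i = (\<Sum>j<m. A $$ (i,j) * x $ j)"
  by (simp add: scalar_prod_def row_def atLeast0LessThan)

lemma adj_vec: assumes A: "A \<in> carrier_mat n m" and x: "x \<in> carrier_vec m" and y: "y \<in> carrier_vec n"
  shows "(A *\<^sub>v x) \<bullet>c y = x \<bullet>c (mat_adjoint A *\<^sub>v (y::complex vec))"
proof -
  have "(A *\<^sub>v x) \<bullet>c y = (\<Sum>i<n. (\<Sum>j<m. A $$ (i,j) * x $ j) * cnj (y $ i))"
    unfolding csprod_sum using A x y by (intro sum.cong) (auto simp: mv_sum simp del: index_mult_mat_vec)
  also have "\<dots> = (\<Sum>i<n. \<Sum>j<m. A $$ (i,j) * x $ j * cnj (y $ i))"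
    by (simp add: sum_distrib_right)
  also have "\<dots> = (\<Sum>j<m. \<Sum>i<n. A $$ (i,j) * x $ j * cnj (y $ i))"
    by (rule sum.swap)
  also have "\<dots> = (\<Sum>j<m. x $ j * cnj (\<Sum>i<n. mat_adjoint A $$ (j,i) * y $ i))"
  proof (rule sum.cong[OF refl])
    fix j assume j: "j \<in> {..<m}"
    have "cnj (\<Sum>i<n. mat_adjoint A $$ (j,i) * y $ i) = (\<Sum>i<n. A $$ (i,j) * cnj (y $ i))"
      unfolding cnj_sum using A j by (intro sum.cong) auto
    moreover have "(\<Sum>i<n. A $$ (i,j) * x $ j * cnj (y $ i)) = x $ j * (\<Sum>i<n. A $$ (i,j) * cnj (y $ i))"
      unfolding sum_distrib_left by (intro sum.cong) auto
    ultimately show "(\<Sum>i<n. A $$ (i,j) * x $ j * cnj (y $ i)) = x $ j * cnj (\<Sum>i<n. mat_adjoint A $$ (j,i) * y $ i)"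
      by simp
  qed
  also have "\<dots> = x \<bullet>c (mat_adjoint A *\<^sub>v y)"
    unfolding csprod_sum using A x y by (intro sum.cong) (auto simp: mv_sum[OF adj_carrier[OF A] y] simp del: index_mult_mat_vec)
  finally show ?thesis .
qed

lemma herm_swap: assumes A: "A \<in> carrier_mat n n" "mat_adjoint A = A" and x: "x \<in> carrier_vec n" and y: "y \<in> carrier_vec n"
  shows "(A *\<^sub>v x) \<bullet>c y = x \<bullet>c (A *\<^sub>v (y::complex vec))"
  using adj_vec[OF A(1) x y] A(2) by simp

lemma unitary_right: assumes "U \<in> carrier_mat n n" "mat_adjoint U * U = 1\<^sub>m n"
  shows "U * mat_adjoint U = 1\<^sub>m n"
  using mat_mult_left_right_inverse[OF adj_carrier[OF assms(1)] assms(1) assms(2)] .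

lemma isometry: assumes U: "U \<in> carrier_mat n m" "mat_adjoint U * U = 1\<^sub>m m"
  and x: "x \<in> carrier_vec m" and y: "y \<in> carrier_vec m"
  shows "(U *\<^sub>v x) \<bullet>c (U *\<^sub>v y) = x \<bullet>c (y::complex vec)"
proof -
  have "(U *\<^sub>v x) \<bullet>c (U *\<^sub>v y) = x \<bullet>c (mat_adjoint U *\<^sub>v (U *\<^sub>v y))"
    using adj_vec[OF U(1) x] U y by simp
  also have "mat_adjoint U *\<^sub>v (U *\<^sub>v y) = y"
    using U y by (metis adj_carrier assoc_mult_mat_vec one_mult_mat_vec)
  finally show ?thesis .
qed


lemma csprod_smult_left: assumes "x \<in> carrier_vec n" "y \<in> carrier_vec n"
  shows "(a \<cdot>\<^sub>v x) \<bullet>c y = a * (x \<bullet>c (y::complex vec))"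
  using assms unfolding csprod_sum sum_distrib_left by (intro sum.cong) auto

lemma csprod_smult_right: assumes "x \<in> carrier_vec n" "y \<in> carrier_vec n"
  shows "x \<bullet>c (a \<cdot>\<^sub>v y) = cnj a * (x \<bullet>c (y::complex vec))"
  using assms unfolding csprod_sum sum_distrib_left by (intro sum.cong) auto

lemma csprod_pos: assumes "x \<in> carrier_vec n" "x \<noteq> 0\<^sub>v n"
  shows "Im (x \<bullet>c (x::complex vec)) = 0 \<and> Re (x \<bullet>c x) > 0"
proof -
  have "x \<bullet>c x > 0" using assms by simp
  then show ?thesis by (simp add: less_complex_def)
qed

definition normv :: "complex vec \<Rightarrow> complex vec" where
  "normv v = complex_of_real (1 / sqrt (Re (v \<bullet>c v))) \<cdot>\<^sub>v v"

lemma normv_carrier[simp]: "v \<in> carrier_vec n \<Longrightarrow> normv v \<in> carrier_vec n"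
  by (simp add: normv_def)

lemma normv_one: assumes v: "v \<in> carrier_vec n" "v \<noteq> 0\<^sub>v n"
  shows "normv v \<bullet>c normv v = 1"
proof -
  obtain r where r: "v \<bullet>c v = complex_of_real r" "r > 0"
    using csprod_pos[OF v] by (metis complex_eq_iff complex_of_real_def Re_complex_of_real Im_complex_of_real)
  have "normv v \<bullet>c normv v = complex_of_real (1 / sqrt r) * cnj (complex_of_real (1 / sqrt r)) * complex_of_real r"
    unfolding normv_def using v r
    by (simp add: csprod_smult_left[of _ n] csprod_smult_right[of _ n])
  also have "\<dots> = complex_of_real ((1 / sqrt r) * (1 / sqrt r) * r)" by (metis complex_cnj_complex_of_real of_real_mult)
  also have "(1 / sqrt r) * (1 / sqrt r) * r = 1" using r(2)
    by (simp add: field_simps)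
  finally show ?thesis by simp
qed

lemma normv_orth: assumes "v \<in> carrier_vec n" "w \<in> carrier_vec n" "v \<bullet>c w = 0"
  shows "normv v \<bullet>c normv w = 0"
  using assms unfolding normv_def by (simp add: csprod_smult_left[of _ n] csprod_smult_right[of _ n])

lemma normv_unit: "v \<bullet>c v = 1 \<Longrightarrow> normv v = v"
  by (simp add: normv_def)

lemma adj_mult_entry2: assumes "W \<in> carrier_mat n m" "B \<in> carrier_mat n k" "i < m" "j < k"
  shows "(mat_adjoint W * (B::complex mat)) $$ (i,j) = col B j \<bullet>c col W i"
  using assms unfolding csprod_sum by (auto simp: scalar_prod_def atLeast0LessThan intro!: sum.cong)

lemma conj_vCons: "conjugate (vCons b (w::complex vec)) = vCons (cnj b) (conjugate w)"
  by (rule eq_vecI) (auto simp: vec_index_vCons)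

lemma cvCons: "vCons a v \<bullet>c vCons b (w::complex vec) = a * cnj b + v \<bullet>c w"
  by (simp add: conj_vCons)

lemma smult_vCons: "c \<cdot>\<^sub>v vCons a (v::complex vec) = vCons (c*a) (c \<cdot>\<^sub>v v)"
  by (rule eq_vecI) (auto simp: vec_index_vCons)

lemma mat_vCons: assumes A: "A \<in> carrier_mat (Suc m) (Suc m)" and x: "x \<in> carrier_vec m" and i: "i < Suc m"
  shows "(A *\<^sub>v vCons a x) $ i = A $$ (i,0) * a + (\<Sum>j<m. A $$ (i, Suc j) * x $ j)"
proof -
  have "(A *\<^sub>v vCons a x) $ i = (\<Sum>j<Suc m. A $$ (i,j) * vCons a x $ j)"
    using mv_sum[OF A _ i, of "vCons a x"] x by simp
  also have "\<dots> = A $$ (i,0) * a + (\<Sum>j<m. A $$ (i, Suc j) * x $ j)"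
    unfolding sum.lessThan_Suc_shift by simp
  finally show ?thesis .
qed

lemma spectral:
  fixes A :: "complex mat"
  assumes "A \<in> carrier_mat n n" "mat_adjoint A = A"
  shows "\<exists>U lam. U \<in> carrier_mat n n \<and> mat_adjoint U * U = 1\<^sub>m n \<and>
     (\<forall>k<n. A *\<^sub>v col U k = lam k \<cdot>\<^sub>v col U k)"
  using assms
proof (induction n arbitrary: A)
  case 0
  show ?case by (intro exI[of _ "1\<^sub>m 0"] exI conjI) (auto intro!: eq_matI)
next
  case (Suc m A)
  define n where "n = Suc m"
  have A: "A \<in> carrier_mat n n" and hA: "mat_adjoint A = A" using Suc.prems n_def by auto
  obtain e where "eigenvalue A e"
    using spectrum_non_empty[OF A] n_def unfolding spectrum_def by auto
  then obtain v where v: "v \<in> carrier_vec n" "v \<noteq> 0\<^sub>v n" "A *\<^sub>v v = e \<cdot>\<^sub>v v"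
    unfolding eigenvalue_def eigenvector_def using A by auto
  define v1 where "v1 = normv v"
  have v1: "v1 \<in> carrier_vec n" "v1 \<bullet>c v1 = 1" using v normv_one[OF v(1,2)] by (auto simp: v1_def)
  have v1ne: "v1 \<noteq> 0\<^sub>v n" using v1 by auto
  have Av1: "A *\<^sub>v v1 = e \<cdot>\<^sub>v v1"
    unfolding v1_def normv_def using mult_mat_vec[OF A v(1)] v(3)
    by (simp add: smult_smult_assoc mult.commute)
  interpret cof_vec_space n "TYPE(complex)" .
  define b where "b = basis_completion v1"
  from basis_completion[OF v1(1) v1ne, folded b_def]
  have dist_b: "distinct b" and indep: "\<not> lin_dep (set b)" and bc: "set b \<subseteq> carrier_vec n"
    and hdb: "hd b = v1" and len_b: "length b = n" by auto
  from hdb len_b n_def obtain vs where bv: "b = v1 # vs" by (cases b, auto)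
  define ws where "ws = gram_schmidt n b"
  from gram_schmidt_result[OF bc dist_b indep refl, folded ws_def]
  have wsc: "set ws \<subseteq> carrier_vec n" and orth: "corthogonal ws" and len_ws: "length ws = n"
    by (auto simp: len_b)
  from gram_schmidt_hd[OF v1(1), of vs, folded bv] have hdws: "hd ws = v1" unfolding ws_def .
  define W where "W = mat_of_cols n (map normv ws)"
  have W: "W \<in> carrier_mat n n" unfolding W_def using len_ws by auto
  have colW: "col W i = normv (ws ! i)" if "i < n" for i
  proof -
    have "ws ! i \<in> carrier_vec n" using wsc that len_ws by auto
    then show ?thesis unfolding W_def using that len_ws by (subst col_mat_of_cols) auto
  qed
  have colWc: "col W i \<in> carrier_vec n" for i using W by auto
  have on: "col W i \<bullet>c col W j = (if i = j then 1 else 0)" if "i < n" "j < n" for i j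
  proof -
    have wi: "ws ! i \<in> carrier_vec n" "ws ! j \<in> carrier_vec n" using wsc that len_ws by auto
    have c: "ws ! i \<bullet>c ws ! j = 0 \<longleftrightarrow> i \<noteq> j" using corthogonalD[OF orth] that len_ws by auto
    show ?thesis
    proof (cases "i = j")
      case True
      then have "ws ! i \<noteq> 0\<^sub>v n" using c wi by auto
      then show ?thesis using True colW that normv_one wi by auto
    next
      case False
      then show ?thesis using c colW that normv_orth wi by auto
    qed
  qed
  have WW: "mat_adjoint W * W = 1\<^sub>m n"
  proof (rule eq_matI)
    fix i j assume "i < dim_row (1\<^sub>m n)" "j < dim_col (1\<^sub>m n)"
    then show "(mat_adjoint W * W) $$ (i,j) = 1\<^sub>m n $$ (i,j)"
      using adj_mult_entry[OF W, of i j] on[of j i] by auto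
  qed (use W in auto)
  have WW': "W * mat_adjoint W = 1\<^sub>m n" using unitary_right[OF W WW] .
  have colW0: "col W 0 = v1"
  proof -
    have "ws ! 0 = v1" using hdws len_ws n_def by (cases ws) auto
    then show ?thesis using colW[of 0] n_def normv_unit[OF v1(2)] by simp
  qed
  define A' where "A' = mat_adjoint W * (A * W)"
  have A': "A' \<in> carrier_mat n n" unfolding A'_def using A W by auto
  have A'e: "A' $$ (i,j) = (A *\<^sub>v col W j) \<bullet>c col W i" if "i < n" "j < n" for i j
    unfolding A'_def adj_mult_entry2[OF W mult_carrier_mat[OF A W] that] col_mult2[OF A W that(2)] ..
  have A'col0: "A' $$ (i,0) = (if i = 0 then e else 0)" if "i < n" for i
  proof -
    have "A' $$ (i,0) = (A *\<^sub>v col W 0) \<bullet>c col W i" using A'e[OF that, of 0] n_def by simp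
    also have "A *\<^sub>v col W 0 = e \<cdot>\<^sub>v col W 0" unfolding colW0 by (rule Av1)
    also have "(e \<cdot>\<^sub>v col W 0) \<bullet>c col W i = e * (col W 0 \<bullet>c col W i)"
      by (rule csprod_smult_left[OF colWc colWc])
    also have "\<dots> = (if i = 0 then e else 0)" using on[of 0 i] that n_def by simp
    finally show ?thesis .
  qed
  have A'row0: "A' $$ (0,j) = 0" if "0 < j" "j < n" for j
  proof -
    have "A' $$ (0,j) = (A *\<^sub>v col W j) \<bullet>c col W 0" using A'e[of 0 j] that by simp
    also have "\<dots> = col W j \<bullet>c (A *\<^sub>v col W 0)" by (rule herm_swap[OF A hA colWc colWc])
    also have "A *\<^sub>v col W 0 = e \<cdot>\<^sub>v col W 0" unfolding colW0 by (rule Av1)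
    also have "col W j \<bullet>c (e \<cdot>\<^sub>v col W 0) = cnj e * (col W j \<bullet>c col W 0)"
      by (rule csprod_smult_right[OF colWc colWc])
    also have "\<dots> = 0" using on[of j 0] that by simp
    finally show ?thesis .
  qed
  have A'herm: "cnj (A' $$ (j,i)) = A' $$ (i,j)" if "i < n" "j < n" for i j
  proof -
    have "cnj (A' $$ (j,i)) = cnj ((A *\<^sub>v col W i) \<bullet>c col W j)" using A'e[of j i] that by simp
    also have "\<dots> = col W j \<bullet>c (A *\<^sub>v col W i)"
      by (rule cnj_sprod[of _ n]) (auto intro!: mult_mat_vec_carrier[OF A] colWc)
    also have "\<dots> = (A *\<^sub>v col W j) \<bullet>c col W i" by (rule herm_swap[OF A hA colWc colWc, symmetric])
    also have "\<dots> = A' $$ (i,j)" using A'e[OF that] by simp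
    finally show ?thesis .
  qed
  define A3 where "A3 = mat m m (\<lambda>(i,j). A' $$ (Suc i, Suc j))"
  have A3: "A3 \<in> carrier_mat m m" unfolding A3_def by simp
  have hA3: "mat_adjoint A3 = A3"
  proof (rule eq_matI)
    fix i j assume ij: "i < dim_row A3" "j < dim_col A3"
    then have "mat_adjoint A3 $$ (i,j) = cnj (A' $$ (Suc j, Suc i))" using A3 by (simp add: A3_def)
    also have "\<dots> = A' $$ (Suc i, Suc j)" using ij A3 n_def by (intro A'herm) auto
    also have "\<dots> = A3 $$ (i,j)" using ij A3 by (simp add: A3_def)
    finally show "mat_adjoint A3 $$ (i,j) = A3 $$ (i,j)" .
  qed (use A3 in auto)
  from Suc.IH[OF A3 hA3] obtain U3 lam3 where U3: "U3 \<in> carrier_mat m m"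
    and UU3: "mat_adjoint U3 * U3 = 1\<^sub>m m" and ev3: "\<And>k. k < m \<Longrightarrow> A3 *\<^sub>v col U3 k = lam3 k \<cdot>\<^sub>v col U3 k"
    by blast
  have onU3: "col U3 i \<bullet>c col U3 j = (if i = j then 1 else 0)" if "i < m" "j < m" for i j
    using adj_mult_entry[OF U3 that(2,1)] UU3 that by (simp split: if_splits)
  define B where "B = mat n n (\<lambda>(i,k). if k = 0 then (if i = 0 then 1 else 0)
     else (if i = 0 then 0 else U3 $$ (i-1, k-1)))"
  have B: "B \<in> carrier_mat n n" unfolding B_def by simp
  have colB0: "col B 0 = vCons 1 (0\<^sub>v m)"
    by (rule eq_vecI) (auto simp: B_def n_def vec_index_vCons)
  have colBS: "col B (Suc k) = vCons 0 (col U3 k)" if "k < m" for k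
    by (rule eq_vecI) (use that U3 in \<open>auto simp: B_def n_def vec_index_vCons\<close>)
  have colBc: "col B k \<in> carrier_vec n" for k using B by auto
  have onB: "col B i \<bullet>c col B j = (if i = j then 1 else 0)" if "i < n" "j < n" for i j
  proof (cases i)
    case 0
    then show ?thesis
    proof (cases j)
      case 0
      then show ?thesis using \<open>i = 0\<close> by (simp add: colB0 cvCons)
    next
      case (Suc j')
      then have "j' < m" using that n_def by auto
      then show ?thesis using \<open>i = 0\<close> Suc U3 by (simp add: colB0 colBS cvCons)
    qed
  next
    case (Suc i')
    then have i': "i' < m" using that n_def by auto
    show ?thesis
    proof (cases j)
      case 0
      then show ?thesis using Suc i' U3 by (simp add: colB0 colBS cvCons)
    next
      case (Suc j')
      then have "j' < m" using that n_def by auto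
      then show ?thesis using \<open>i = Suc i'\<close> Suc i' onU3 by (simp add: colBS cvCons)
    qed
  qed
  define U where "U = W * B"
  have U: "U \<in> carrier_mat n n" unfolding U_def using W B by auto
  have colU: "col U k = W *\<^sub>v col B k" if "k < n" for k
    unfolding U_def by (rule col_mult2[OF W B that])
  have UU: "mat_adjoint U * U = 1\<^sub>m n"
  proof (rule eq_matI)
    fix i j assume "i < dim_row (1\<^sub>m n)" "j < dim_col (1\<^sub>m n)"
    then have ij: "i < n" "j < n" by auto
    have "(mat_adjoint U * U) $$ (i,j) = col U j \<bullet>c col U i" using adj_mult_entry[OF U ij] .
    also have "\<dots> = col B j \<bullet>c col B i" using colU ij isometry[OF W WW colBc colBc] by simp
    also have "\<dots> = 1\<^sub>m n $$ (i,j)" using onB[of j i] ij by simp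
    finally show "(mat_adjoint U * U) $$ (i,j) = 1\<^sub>m n $$ (i,j)" .
  qed (use U in auto)
  have WA': "W * A' = A * W"
  proof -
    have "W * A' = (W * mat_adjoint W) * (A * W)" unfolding A'_def
      using W A by (subst assoc_mult_mat[of _ n n _ n _ n]) auto
    also have "\<dots> = A * W" using WW' A W by simp
    finally show ?thesis .
  qed
  have A'v: "A' *\<^sub>v vCons a x = vCons (e * a) (A3 *\<^sub>v x)" if x: "x \<in> carrier_vec m" for a x
  proof (rule eq_vecI)
    show "dim_vec (A' *\<^sub>v vCons a x) = dim_vec (vCons (e * a) (A3 *\<^sub>v x))" using A' A3 n_def by simp
    fix i assume "i < dim_vec (vCons (e * a) (A3 *\<^sub>v x))"
    then have i: "i < Suc m" using A3 by simp
    have A's: "A' \<in> carrier_mat (Suc m) (Suc m)" using A' n_def by simp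
    have e1: "(A' *\<^sub>v vCons a x) $ i = A' $$ (i,0) * a + (\<Sum>j<m. A' $$ (i, Suc j) * x $ j)"
      by (rule mat_vCons[OF A's x i])
    show "(A' *\<^sub>v vCons a x) $ i = vCons (e * a) (A3 *\<^sub>v x) $ i"
    proof (cases i)
      case 0
      have "(\<Sum>j<m. A' $$ (i, Suc j) * x $ j) = 0" using A'row0 0 n_def by simp
      then show ?thesis using e1 A'col0[of 0] 0 n_def by simp
    next
      case (Suc i')
      then have i': "i' < m" using i by simp
      have "(A3 *\<^sub>v x) $ i' = (\<Sum>j<m. A3 $$ (i',j) * x $ j)" by (rule mv_sum[OF A3 x i'])
      also have "\<dots> = (\<Sum>j<m. A' $$ (i, Suc j) * x $ j)" using i' Suc by (simp add: A3_def)
      finally show ?thesis using e1 A'col0[of i] Suc i n_def by simp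
    qed
  qed
  define lam where "lam k = (if k = 0 then e else lam3 (k-1))" for k
  have evB: "A' *\<^sub>v col B k = lam k \<cdot>\<^sub>v col B k" if "k < n" for k
  proof (cases k)
    case 0
    have z1: "A3 *\<^sub>v 0\<^sub>v m = 0\<^sub>v m" using A3 by (intro eq_vecI) auto
    have z2: "e \<cdot>\<^sub>v 0\<^sub>v m = (0\<^sub>v m :: complex vec)" by (intro eq_vecI) auto
    show ?thesis using A'v[of "0\<^sub>v m" 1] A3 0 z1 z2 by (simp add: colB0 lam_def smult_vCons)
  next
    case (Suc k')
    then have k': "k' < m" using that n_def by simp
    then show ?thesis using A'v[of "col U3 k'" 0] U3 ev3[OF k'] Suc
      by (simp add: colBS lam_def smult_vCons)
  qed
  show ?case
  proof (intro exI conjI allI impI)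
    show "U \<in> carrier_mat (Suc m) (Suc m)" using U n_def by simp
    show "mat_adjoint U * U = 1\<^sub>m (Suc m)" using UU n_def by simp
    fix k assume "k < Suc m"
    then have k: "k < n" using n_def by simp
    have "A *\<^sub>v col U k = (A * W) *\<^sub>v col B k" using colU[OF k] A W B
      by (simp add: assoc_mult_mat_vec[OF A W colBc])
    also have "\<dots> = W *\<^sub>v (A' *\<^sub>v col B k)" unfolding WA'[symmetric] by (rule assoc_mult_mat_vec[OF W A' colBc])
    also have "\<dots> = W *\<^sub>v (lam k \<cdot>\<^sub>v col B k)" using evB[OF k] by simp
    also have "\<dots> = lam k \<cdot>\<^sub>v col U k" using mult_mat_vec[OF W colBc] colU[OF k] by simp
    finally show "A *\<^sub>v col U k = lam k \<cdot>\<^sub>v col U k" .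
  qed
qed

lemma UU_entry: assumes "U \<in> carrier_mat n n" "i < n" "j < n"
  shows "(U * mat_adjoint U) $$ (j,i) = (\<Sum>k<n. U $$ (j,k) * cnj (U $$ (i,k)))"
  using assms by (auto simp: scalar_prod_def atLeast0LessThan intro!: sum.cong)

lemma trace_unitary: assumes U: "U \<in> carrier_mat n n" "mat_adjoint U * U = 1\<^sub>m n"
  and M: "M \<in> carrier_mat n n"
  shows "mtrace M = (\<Sum>k<n. (M *\<^sub>v col U k) \<bullet>c col U k)"
proof -
  have UU': "U * mat_adjoint U = 1\<^sub>m n" using unitary_right[OF U] .
  have "(\<Sum>k<n. (M *\<^sub>v col U k) \<bullet>c col U k) =
        (\<Sum>k<n. \<Sum>i<n. (\<Sum>j<n. M $$ (i,j) * U $$ (j,k)) * cnj (U $$ (i,k)))"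
  proof (rule sum.cong[OF refl])
    fix k assume k: "k \<in> {..<n}"
    show "(M *\<^sub>v col U k) \<bullet>c col U k = (\<Sum>i<n. (\<Sum>j<n. M $$ (i,j) * U $$ (j,k)) * cnj (U $$ (i,k)))"
      unfolding csprod_sum using U M k
      by (intro sum.cong) (auto simp: mv_sum[OF M] simp del: index_mult_mat_vec)
  qed
  also have "\<dots> = (\<Sum>k<n. \<Sum>i<n. \<Sum>j<n. M $$ (i,j) * U $$ (j,k) * cnj (U $$ (i,k)))"
    by (simp add: sum_distrib_right)
  also have "\<dots> = (\<Sum>i<n. \<Sum>k<n. \<Sum>j<n. M $$ (i,j) * U $$ (j,k) * cnj (U $$ (i,k)))"
    by (rule sum.swap)
  also have "\<dots> = (\<Sum>i<n. \<Sum>j<n. \<Sum>k<n. M $$ (i,j) * U $$ (j,k) * cnj (U $$ (i,k)))"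
    by (rule sum.cong[OF refl], rule sum.swap)
  also have "\<dots> = (\<Sum>i<n. \<Sum>j<n. M $$ (i,j) * (U * mat_adjoint U) $$ (j,i))"
    using U by (intro sum.cong refl) (simp add: UU_entry[OF U(1)] sum_distrib_left mult.assoc del: index_mult_mat)
  also have "\<dots> = (\<Sum>i<n. \<Sum>j<n. M $$ (i,j) * (if j = i then 1 else 0))"
    unfolding UU' by (intro sum.cong refl) simp
  also have "\<dots> = (\<Sum>i<n. M $$ (i,i))" by (simp add: if_distrib cong: if_cong)
  also have "\<dots> = mtrace M" using M by (simp add: mtrace_def)
  finally show ?thesis by simp
qed

lemma herm_real: assumes "A \<in> carrier_mat n n" "mat_adjoint A = A" "x \<in> carrier_vec n"
  shows "Im ((A *\<^sub>v x) \<bullet>c x) = 0"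
proof -
  have "cnj ((A *\<^sub>v x) \<bullet>c x) = x \<bullet>c (A *\<^sub>v x)" using assms by (intro cnj_sprod[of _ n]) auto
  also have "\<dots> = (A *\<^sub>v x) \<bullet>c x" using herm_swap[OF assms(1,2) assms(3,3)] by simp
  finally show ?thesis by (metis Reals_cnj_iff complex_is_Real_iff)
qed


lemma adjv_entry: assumes "U \<in> carrier_mat n n" "x \<in> carrier_vec n" "k < n"
  shows "(mat_adjoint U *\<^sub>v x) $ k = x \<bullet>c col (U::complex mat) k"
  using assms unfolding csprod_sum by (auto simp: scalar_prod_def atLeast0LessThan mult.commute intro!: sum.cong)

lemma key:
  assumes psi: "unit_vec n \<psi>" and V: "verification_op n \<psi> \<Omega>" and D: "density_op n \<sigma>"
  shows "0 \<le> Re (mtrace (\<Omega> * \<sigma>)) \<and>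
    Re (mtrace (\<Omega> * \<sigma>)) \<le> 1 - spectral_gap \<Omega> * (1 - Re ((\<sigma> *\<^sub>v \<psi>) \<bullet>c \<psi>))"
proof -
  have psic: "\<psi> \<in> carrier_vec n" and pp: "\<psi> \<bullet>c \<psi> = 1" using psi by (auto simp: unit_vec_def)
  have Om: "\<Omega> \<in> carrier_mat n n" and hOm: "mat_adjoint \<Omega> = \<Omega>"
    and psdOm: "\<And>v. v \<in> carrier_vec n \<Longrightarrow> 0 \<le> Re ((\<Omega> *\<^sub>v v) \<bullet>c v)"
    and fix1: "\<Omega> *\<^sub>v \<psi> = \<psi>"
    and nd: "\<And>v. v \<in> carrier_vec n \<Longrightarrow> \<Omega> *\<^sub>v v = v \<Longrightarrow> \<exists>c. v = c \<cdot>\<^sub>v \<psi>"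
    using V by (auto simp: verification_op_def psd_def hermitian_def)
  have sg: "\<sigma> \<in> carrier_mat n n" and hsg: "mat_adjoint \<sigma> = \<sigma>"
    and psdsg: "\<And>v. v \<in> carrier_vec n \<Longrightarrow> 0 \<le> Re ((\<sigma> *\<^sub>v v) \<bullet>c v)"
    and trsg: "mtrace \<sigma> = 1"
    using D by (auto simp: density_op_def psd_def hermitian_def)
  obtain U lam where U: "U \<in> carrier_mat n n" and UU: "mat_adjoint U * U = 1\<^sub>m n"
    and ev: "\<And>k. k < n \<Longrightarrow> \<Omega> *\<^sub>v col U k = lam k \<cdot>\<^sub>v col U k"
    using spectral[OF Om hOm] by blast
  have UU': "U * mat_adjoint U = 1\<^sub>m n" using unitary_right[OF U UU] .
  have uc: "col U k \<in> carrier_vec n" for k using U by auto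
  have on: "col U i \<bullet>c col U j = (if i = j then 1 else 0)" if "i < n" "j < n" for i j
    using adj_mult_entry[OF U that(2,1)] UU that by (simp split: if_splits)
  have lam_eq: "lam k = (\<Omega> *\<^sub>v col U k) \<bullet>c col U k" if "k < n" for k
    using ev[OF that] csprod_smult_left[OF uc uc, of "lam k" k k] on[OF that that] by simp
  have lam_real: "Im (lam k) = 0" if "k < n" for k
    using lam_eq[OF that] herm_real[OF Om hOm uc] by simp
  have lam_nn: "0 \<le> Re (lam k)" if "k < n" for k
    using lam_eq[OF that] psdOm[OF uc] by simp
  have "\<exists>k<n. \<psi> \<bullet>c col U k \<noteq> 0"
  proof (rule ccontr)
    assume "\<not> ?thesis"
    then have z: "mat_adjoint U *\<^sub>v \<psi> = 0\<^sub>v n"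
      using adjv_entry[OF U psic] U by (intro eq_vecI) auto
    have "\<psi> = (U * mat_adjoint U) *\<^sub>v \<psi>" using UU' psic by simp
    also have "\<dots> = U *\<^sub>v (mat_adjoint U *\<^sub>v \<psi>)" by (rule assoc_mult_mat_vec[OF U adj_carrier[OF U] psic])
    also have "\<dots> = 0\<^sub>v n" unfolding z using U by (intro eq_vecI) auto
    finally show False using pp by simp
  qed
  then obtain k0 where k0: "k0 < n" and nz: "\<psi> \<bullet>c col U k0 \<noteq> 0" by blast
  have "\<psi> \<bullet>c col U k0 = (\<Omega> *\<^sub>v \<psi>) \<bullet>c col U k0" using fix1 by simp
  also have "\<dots> = \<psi> \<bullet>c (\<Omega> *\<^sub>v col U k0)" by (rule herm_swap[OF Om hOm psic uc])
  also have "\<dots> = cnj (lam k0) * (\<psi> \<bullet>c col U k0)" using ev[OF k0] csprod_smult_right[OF psic uc] by simp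
  finally have "cnj (lam k0) = 1" using nz by simp
  then have l0: "lam k0 = 1" by (metis complex_cnj_cnj complex_cnj_one)
  obtain c where uk0: "col U k0 = c \<cdot>\<^sub>v \<psi>"
    using nd[OF uc] ev[OF k0] l0 by auto
  have cc: "c * cnj c = 1"
    using on[OF k0 k0] uk0 csprod_smult_left[OF _ psic, of "c \<cdot>\<^sub>v \<psi>" c] csprod_smult_right[OF psic psic, of c] pp psic
    by simp
  have lne: "lam k \<noteq> 1" if k: "k < n" "k \<noteq> k0" for k
  proof
    assume "lam k = 1"
    then obtain c' where uk: "col U k = c' \<cdot>\<^sub>v \<psi>" using nd[OF uc] ev[OF k(1)] by auto
    have "0 = col U k \<bullet>c col U k0" using on[OF k(1) k0] k by simp
    also have "\<dots> = c' * cnj c" unfolding uk uk0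
      using csprod_smult_left[OF _ psic, of "c \<cdot>\<^sub>v \<psi>" c'] csprod_smult_right[OF psic psic, of c] pp psic by simp
    finally have "c' = 0" using cc by auto
    then have "col U k \<bullet>c col U k = 0" unfolding uk using psic by simp
    then show False using on[OF k(1) k(1)] by simp
  qed
  define S where "S = {k. eigenvalue \<Omega> k \<and> k \<noteq> 1}"
  have finS: "finite S"
    using card_finite_spectrum(1)[OF Om] unfolding S_def spectrum_def by (rule rev_finite_subset) auto
  have lS: "lam k \<in> S" if k: "k < n" "k \<noteq> k0" for k
  proof -
    have "col U k \<noteq> 0\<^sub>v n" using on[OF k(1) k(1)] by auto
    then have "eigenvector \<Omega> (col U k) (lam k)" unfolding eigenvector_def using ev[OF k(1)] Om uc by auto
    then show ?thesis unfolding S_def eigenvalue_def using lne[OF k] by auto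
  qed
  define \<beta> where "\<beta> = second_eig \<Omega>"
  have lb: "Re (lam k) \<le> \<beta>" if k: "k < n" "k \<noteq> k0" for k
  proof -
    have "S \<noteq> {}" using lS[OF k] by auto
    then have "\<beta> = Max (Re ` S)" unfolding \<beta>_def second_eig_def S_def by (simp only: if_False)
    then show ?thesis using finS lS[OF k] by (simp add: Max_ge)
  qed
  define q where "q k = (\<sigma> *\<^sub>v col U k) \<bullet>c col U k" for k
  have q_real: "Im (q k) = 0" for k unfolding q_def using herm_real[OF sg hsg uc] .
  have q_nn: "0 \<le> Re (q k)" for k unfolding q_def using psdsg[OF uc] .
  have tr1: "mtrace (\<Omega> * \<sigma>) = (\<Sum>k<n. cnj (lam k) * q k)"
  proof -
    have "mtrace (\<Omega> * \<sigma>) = (\<Sum>k<n. ((\<Omega> * \<sigma>) *\<^sub>v col U k) \<bullet>c col U k)"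
      using trace_unitary[OF U UU] Om sg by simp
    also have "\<dots> = (\<Sum>k<n. cnj (lam k) * q k)"
    proof (rule sum.cong[OF refl])
      fix k assume "k \<in> {..<n}"
      then have k: "k < n" by simp
      have sc: "\<sigma> *\<^sub>v col U k \<in> carrier_vec n" using sg uc by simp
      have "((\<Omega> * \<sigma>) *\<^sub>v col U k) \<bullet>c col U k = (\<Omega> *\<^sub>v (\<sigma> *\<^sub>v col U k)) \<bullet>c col U k"
        using Om sg uc by simp
      also have "\<dots> = (\<sigma> *\<^sub>v col U k) \<bullet>c (\<Omega> *\<^sub>v col U k)" by (rule herm_swap[OF Om hOm sc uc])
      also have "\<dots> = cnj (lam k) * q k" unfolding q_def ev[OF k] by (rule csprod_smult_right[OF sc uc])
      finally show "((\<Omega> * \<sigma>) *\<^sub>v col U k) \<bullet>c col U k = cnj (lam k) * q k" .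
    qed
    finally show ?thesis .
  qed
  have tr2: "(\<Sum>k<n. q k) = 1"
    using trace_unitary[OF U UU sg] trsg unfolding q_def by simp
  have qk0: "q k0 = (\<sigma> *\<^sub>v \<psi>) \<bullet>c \<psi>"
  proof -
    have "q k0 = (c \<cdot>\<^sub>v (\<sigma> *\<^sub>v \<psi>)) \<bullet>c (c \<cdot>\<^sub>v \<psi>)"
      unfolding q_def uk0 using mult_mat_vec[OF sg psic] by simp
    also have "\<dots> = c * cnj c * ((\<sigma> *\<^sub>v \<psi>) \<bullet>c \<psi>)"
      using csprod_smult_left[of "\<sigma> *\<^sub>v \<psi>" n "c \<cdot>\<^sub>v \<psi>" c] csprod_smult_right[of "\<sigma> *\<^sub>v \<psi>" n \<psi> c] sg psic
      by simp
    finally show ?thesis using cc by simp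
  qed
  define L where "L k = Re (lam k)" for k
  define R where "R k = Re (q k)" for k
  have Rtr: "Re (mtrace (\<Omega> * \<sigma>)) = (\<Sum>k<n. L k * R k)"
    unfolding tr1 Re_sum L_def R_def using lam_real q_real by (intro sum.cong) auto
  have Rsum: "(\<Sum>k<n. R k) = 1" unfolding R_def using arg_cong[OF tr2, of Re] by (simp add: Re_sum)
  have R0: "R k0 = Re ((\<sigma> *\<^sub>v \<psi>) \<bullet>c \<psi>)" unfolding R_def qk0 ..
  have L0: "L k0 = 1" unfolding L_def l0 by simp
  have fin: "finite {..<n}" by simp
  have k0in: "k0 \<in> {..<n}" using k0 by simp
  have split1: "(\<Sum>k<n. L k * R k) = L k0 * R k0 + (\<Sum>k\<in>{..<n} - {k0}. L k * R k)"
    using sum.remove[OF fin k0in] .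
  have split2: "(\<Sum>k<n. R k) = R k0 + (\<Sum>k\<in>{..<n} - {k0}. R k)"
    using sum.remove[OF fin k0in] .
  have "(\<Sum>k\<in>{..<n} - {k0}. L k * R k) \<le> (\<Sum>k\<in>{..<n} - {k0}. \<beta> * R k)"
    using lb q_nn unfolding L_def R_def by (intro sum_mono mult_right_mono) auto
  also have "\<dots> = \<beta> * (\<Sum>k\<in>{..<n} - {k0}. R k)" by (simp add: sum_distrib_left)
  also have "(\<Sum>k\<in>{..<n} - {k0}. R k) = 1 - R k0" using split2 Rsum by simp
  finally have up: "Re (mtrace (\<Omega> * \<sigma>)) \<le> R k0 + \<beta> * (1 - R k0)"
    using Rtr split1 L0 by simp
  have lo: "0 \<le> Re (mtrace (\<Omega> * \<sigma>))"
    unfolding Rtr using lam_nn q_nn unfolding L_def R_def by (intro sum_nonneg mult_nonneg_nonneg) auto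
  show ?thesis using up lo R0 unfolding spectral_gap_def \<beta>_def by (simp add: algebra_simps)
qed

lemma amgm: fixes x :: "nat \<Rightarrow> real"
  assumes "\<And>j. j \<in> {1..N} \<Longrightarrow> x j \<ge> 0"
  shows "(\<Prod>j=1..N. x j) \<le> ((\<Sum>j=1..N. x j) / real N) ^ N"
proof (cases "N = 0")
  case True then show ?thesis by simp
next
  case False
  have c: "card {1..N} = N" by simp
  have "(\<Prod>j=1..N. x j) powr (1 / real N) \<le> (\<Sum>j=1..N. x j / real N)"
    using arith_geom_mean[of "{1..N}" x] assms False by simp
  also have "\<dots> = (\<Sum>j=1..N. x j) / real N" by (simp add: sum_divide_distrib)
  finally have h: "(\<Prod>j=1..N. x j) powr (1 / real N) \<le> (\<Sum>j=1..N. x j) / real N" .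
  have p0: "(\<Prod>j=1..N. x j) \<ge> 0" using assms by (intro prod_nonneg) auto
  have "(\<Prod>j=1..N. x j) = ((\<Prod>j=1..N. x j) powr (1 / real N)) ^ N"
  proof (cases "(\<Prod>j=1..N. x j) = 0")
    case True then show ?thesis unfolding True using False by simp
  next
    case nz: False
    let ?p = "(\<Prod>j=1..N. x j)"
    have pp: "?p > 0" using p0 nz by linarith
    have "(?p powr (1 / real N)) ^ N = (?p powr (1 / real N)) powr (real N)"
      by (rule powr_realpow[symmetric]) (metis pp powr_gt_zero less_irrefl)
    also have "\<dots> = ?p powr (1 / real N * real N)" by (simp add: powr_powr)
    also have "\<dots> = ?p" using False pp by simp
    finally show ?thesis by simp
  qed
  also have "\<dots> \<le> ((\<Sum>j=1..N. x j) / real N) ^ N"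
    using h by (intro power_mono) auto
  finally show ?thesis .
qed


theorem proposition1:
  fixes n N :: nat and \<psi> :: "complex vec" and \<Omega> :: "complex mat"
    and \<sigma> :: "nat \<Rightarrow> complex mat"
  assumes "unit_vec n \<psi>"
    and "verification_op n \<psi> \<Omega>"
    and "\<And>j. j \<in> {1..N} \<Longrightarrow> density_op n (\<sigma> j)"
  shows "(\<Prod>j=1..N. Re (mtrace (\<Omega> * \<sigma> j)))
         \<le> (1 - spectral_gap \<Omega> *
               ((\<Sum>j=1..N. 1 - Re ((\<sigma> j *\<^sub>v \<psi>) \<bullet>c \<psi>)) / real N)) ^ N"
proof (cases "N = 0")
  case True
  then show ?thesis by simp
next
  case False
  define a where "a j = Re (mtrace (\<Omega> * \<sigma> j))" for j
  define b where "b j = 1 - spectral_gap \<Omega> * (1 - Re ((\<sigma> j *\<^sub>v \<psi>) \<bullet>c \<psi>))" for j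
  have ab: "0 \<le> a j \<and> a j \<le> b j" if "j \<in> {1..N}" for j
    unfolding a_def b_def using key[OF assms(1,2) assms(3)[OF that]] .
  have "(\<Prod>j=1..N. Re (mtrace (\<Omega> * \<sigma> j))) = (\<Prod>j=1..N. a j)" unfolding a_def ..
  also have "\<dots> \<le> (\<Prod>j=1..N. b j)" by (rule prod_mono) (use ab in auto)
  also have "\<dots> \<le> ((\<Sum>j=1..N. b j) / real N) ^ N" by (rule amgm) (use ab in force)
  also have "(\<Sum>j=1..N. b j) / real N = 1 - spectral_gap \<Omega> *
               ((\<Sum>j=1..N. 1 - Re ((\<sigma> j *\<^sub>v \<psi>) \<bullet>c \<psi>)) / real N)"
    using False unfolding b_def by (simp add: sum_subtractf sum_distrib_left[symmetric] field_simps)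
  finally show ?thesis .
qed

end
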